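(* Let $t\ge 2$ and $n\ge t+5$ be integers with $n-t\equiv 2\pmod 3$. Then $\rho\big(K_1\vee (K_{1,t}\cup \tfrac{n-t-2}{3}K_3)\big)<\rho(K_{1,1,n-2})$.
   Context: $\rho$ denotes the spectral radius (largest adjacency eigenvalue). $G\vee H$ is the join of disjoint graphs $G$ and $H$ (disjoint union plus all edges between them), $G\cup H$ is the disjoint union, $kG$ denotes $k$ disjoint copies of $G$, $K_{1,t}$ is the star with $t$ leaves, and $K_{1,1,n-2}$ is the complete tripartite graph with parts of sizes $1,1,n-2$. *)

theory Defs
  imports "Jordan_Normal_Form.Spectral_Radius"
begin

text \<open>A finite simple graph on the vertex set {0..<n}, given by its number of
  vertices and an adjacency predicate (only its values on {0..<n} matter;
  all constructions below are symmetric and irreflexive).\<close>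
datatype sgraph = SG nat "nat \<Rightarrow> nat \<Rightarrow> bool"

fun nverts :: "sgraph \<Rightarrow> nat" where "nverts (SG n E) = n"
fun adjr :: "sgraph \<Rightarrow> nat \<Rightarrow> nat \<Rightarrow> bool" where "adjr (SG n E) = E"

definition gunion :: "sgraph \<Rightarrow> sgraph \<Rightarrow> sgraph" where
  "gunion G H = SG (nverts G + nverts H)
     (\<lambda>i j. (i < nverts G \<and> j < nverts G \<and> adjr G i j) \<or>
            (nverts G \<le> i \<and> nverts G \<le> j \<and> adjr H (i - nverts G) (j - nverts G)))"

definition gjoin :: "sgraph \<Rightarrow> sgraph \<Rightarrow> sgraph" where
  "gjoin G H = SG (nverts G + nverts H)
     (\<lambda>i j. adjr (gunion G H) i j \<or>
            (i < nverts G \<and> nverts G \<le> j \<and> j < nverts G + nverts H) \<or>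
            (j < nverts G \<and> nverts G \<le> i \<and> i < nverts G + nverts H))"

definition complete :: "nat \<Rightarrow> sgraph" where "complete m = SG m (\<lambda>i j. i \<noteq> j)"
definition empty_graph :: "nat \<Rightarrow> sgraph" where "empty_graph m = SG m (\<lambda>i j. False)"

definition star :: "nat \<Rightarrow> sgraph" where "star t = gjoin (complete 1) (empty_graph t)"

fun copies :: "nat \<Rightarrow> sgraph \<Rightarrow> sgraph" where
  "copies 0 G = empty_graph 0"
| "copies (Suc k) G = gunion G (copies k G)"

definition complete_tripartite :: "nat \<Rightarrow> nat \<Rightarrow> nat \<Rightarrow> sgraph" where
  "complete_tripartite a b c = gjoin (gjoin (empty_graph a) (empty_graph b)) (empty_graph c)"

definition adj_matrix :: "sgraph \<Rightarrow> complex mat" where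
  "adj_matrix G = mat (nverts G) (nverts G) (\<lambda>(i,j). if adjr G i j then 1 else 0)"

text \<open>Spectral radius (largest modulus of an adjacency eigenvalue, which for a
  graph equals the largest adjacency eigenvalue).\<close>
definition rho :: "sgraph \<Rightarrow> real" where
  "rho G = spectral_radius (adj_matrix G)"

end

theory Submission
  imports Defs
begin

lemma nv_union[simp]: "nverts (gunion G H) = nverts G + nverts H" by (simp add: gunion_def)
lemma nv_join[simp]: "nverts (gjoin G H) = nverts G + nverts H" by (simp add: gjoin_def)
lemma adj_union[simp]: "adjr (gunion G H) i j =
  ((i < nverts G \<and> j < nverts G \<and> adjr G i j) \<or>
   (nverts G \<le> i \<and> nverts G \<le> j \<and> adjr H (i - nverts G) (j - nverts G)))"
  by (simp add: gunion_def)
lemma adj_join[simp]: "adjr (gjoin G H) i j =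
  (adjr (gunion G H) i j \<or>
   (i < nverts G \<and> nverts G \<le> j \<and> j < nverts G + nverts H) \<or>
   (j < nverts G \<and> nverts G \<le> i \<and> i < nverts G + nverts H))"
  unfolding gjoin_def by (simp only: adjr.simps)
lemma nv_complete[simp]: "nverts (complete m) = m" by (simp add: complete_def)
lemma adj_complete[simp]: "adjr (complete m) i j = (i \<noteq> j)" by (simp add: complete_def)
lemma nv_empty[simp]: "nverts (empty_graph m) = m" by (simp add: empty_graph_def)
lemma adj_empty[simp]: "adjr (empty_graph m) i j = False" by (simp add: empty_graph_def)
lemma nv_copies[simp]: "nverts (copies k G) = k * nverts G" by (induction k) auto


definition blk :: "nat \<Rightarrow> nat \<Rightarrow> nat \<Rightarrow> bool" where
  "blk k i j = (\<exists>q<k. 3*q \<le> i \<and> i < 3*q+3 \<and> 3*q \<le> j \<and> j < 3*q+3 \<and> i \<noteq> j)"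

lemma adj_copies3: "adjr (copies k (complete 3)) i j = blk k i j"
proof (induction k arbitrary: i j)
  case 0 then show ?case by (simp add: blk_def)
next
  case (Suc k)
  have L: "adjr (copies (Suc k) (complete 3)) i j =
     ((i<3 \<and> j<3 \<and> i\<noteq>j) \<or> (3\<le>i \<and> 3\<le>j \<and> blk k (i-3) (j-3)))"
    using Suc by simp
  show ?case unfolding L
  proof
    assume "(i<3 \<and> j<3 \<and> i\<noteq>j) \<or> (3\<le>i \<and> 3\<le>j \<and> blk k (i-3) (j-3))"
    then show "blk (Suc k) i j"
    proof
      assume "i<3 \<and> j<3 \<and> i\<noteq>j"
      then show ?thesis unfolding blk_def by (intro exI[of _ 0]) simp
    next
      assume h: "3\<le>i \<and> 3\<le>j \<and> blk k (i-3) (j-3)"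
      then obtain q where q: "q<k" "3*q \<le> i-3" "i-3 < 3*q+3" "3*q \<le> j-3" "j-3 < 3*q+3" "i-3 \<noteq> j-3"
        unfolding blk_def by blast
      have "Suc q < Suc k \<and> 3*Suc q \<le> i \<and> i < 3*Suc q+3 \<and> 3*Suc q \<le> j \<and> j < 3*Suc q+3 \<and> i \<noteq> j"
        using q h by (auto simp: mult_Suc_right)
      then show ?thesis unfolding blk_def by blast
    qed
  next
    assume "blk (Suc k) i j"
    then obtain q where q: "q<Suc k" "3*q \<le> i" "i < 3*q+3" "3*q \<le> j" "j < 3*q+3" "i \<noteq> j"
      unfolding blk_def by blast
    show "(i<3 \<and> j<3 \<and> i\<noteq>j) \<or> (3\<le>i \<and> 3\<le>j \<and> blk k (i-3) (j-3))"
    proof (cases q)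
      case 0
      then show ?thesis using q by simp
    next
      case (Suc q')
      have "q'<k \<and> 3*q' \<le> i-3 \<and> i-3 < 3*q'+3 \<and> 3*q' \<le> j-3 \<and> j-3 < 3*q'+3 \<and> i-3 \<noteq> j-3"
        using q Suc by (auto simp: mult_Suc_right)
      then have "blk k (i-3) (j-3)" unfolding blk_def by blast
      moreover have "3 \<le> i" "3 \<le> j" using q Suc by (auto simp: mult_Suc_right)
      ultimately show ?thesis by blast
    qed
  qed
qed


lemma adjU: "adjr (gunion (star t) C) i j = ((i=0 \<and> 1\<le>j \<and> j<t+1) \<or> (j=0 \<and> 1\<le>i \<and> i<t+1) \<or>
   (t+1\<le>i \<and> t+1\<le>j \<and> adjr C (i-(t+1)) (j-(t+1))))"
proof -
  have s: "adjr (star t) i j = ((i=0 \<and> 1\<le>j \<and> j<t+1) \<or> (j=0 \<and> 1\<le>i \<and> i<t+1))" for i j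
    by (auto simp: star_def)
  show ?thesis by (simp only: adj_union s) (auto simp: star_def)
qed

lemma adjJ1: "adjr (gjoin (complete 1) H) i j = ((i=0 \<and> 0<j \<and> j < 1 + nverts H) \<or> (j=0 \<and> 0<i \<and> i<1+nverts H) \<or> (0<i \<and> 0<j \<and> adjr H (i-1) (j-1)))"
  by auto

lemma adj_G1: "adjr (gjoin (complete 1) (gunion (star t) C)) i j =
   ((i = 0 \<and> 0 < j \<and> j < t + 2 + nverts C) \<or> (j = 0 \<and> 0 < i \<and> i < t + 2 + nverts C) \<or>
     (i = 1 \<and> 2 \<le> j \<and> j < t + 2) \<or> (j = 1 \<and> 2 \<le> i \<and> i < t + 2) \<or>
     (t + 2 \<le> i \<and> t + 2 \<le> j \<and> adjr C (i-(t+2)) (j-(t+2))))"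
proof (cases "i = 0 \<or> j = 0")
  case True
  then show ?thesis unfolding adjJ1 adjU by (auto simp: star_def)
next
  case False
  then have e: "(i - 1 = 0) = (i = 1)" "(j - 1 = 0) = (j = 1)" "(1 \<le> j - 1) = (2 \<le> j)"
    "(1 \<le> i - 1) = (2 \<le> i)" "(j - 1 < t + 1) = (j < t + 2)" "(i - 1 < t + 1) = (i < t + 2)"
    "(t + 1 \<le> i - 1) = (t + 2 \<le> i)" "(t + 1 \<le> j - 1) = (t + 2 \<le> j)"
    "i - 1 - (t + 1) = i - (t + 2)" "j - 1 - (t + 1) = j - (t + 2)" "(0 < i) = True" "(0 < j) = True"
    "(i = 0) = False" "(j = 0) = False"
    by auto
  show ?thesis unfolding adjJ1 adjU e by simp
qed

lemma nv_G1: "nverts (gjoin (complete 1) (gunion (star t) (copies k (complete 3)))) = t + 2 + 3*k"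
  by (simp add: star_def)

lemma adj_K: "adjr (complete_tripartite 1 1 m) i j = (i < m + 2 \<and> j < m + 2 \<and> i \<noteq> j \<and> (i < 2 \<or> j < 2))"
  unfolding complete_tripartite_def by auto
lemma nv_K: "nverts (complete_tripartite 1 1 m) = m + 2"
  unfolding complete_tripartite_def by simp



lemma mat01_mult:
  assumes "w \<in> carrier_vec N" "i < N"
  shows "(mat N N (\<lambda>(i,j). if E i j then (1::complex) else 0) *\<^sub>v w) $ i = sum (\<lambda>j. w $ j) {j. j < N \<and> E i j}"
proof -
  have "(mat N N (\<lambda>(i,j). if E i j then (1::complex) else 0) *\<^sub>v w) $ i
        = (\<Sum>j\<in>{0..<N}. (if E i j then 1 else 0) * w $ j)"
    using assms by (simp add: scalar_prod_def)
  also have "\<dots> = (\<Sum>j\<in>{0..<N}. (if E i j then w $ j else 0))"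
    by (rule sum.cong) auto
  also have "\<dots> = sum (\<lambda>j. w $ j) {j \<in> {0..<N}. E i j}"
    by (rule sum.inter_filter[symmetric]) simp
  also have "{j \<in> {0..<N}. E i j} = {j. j < N \<and> E i j}" by auto
  finally show ?thesis .
qed

lemma collatz:
  fixes v :: "nat \<Rightarrow> real"
  assumes N: "0 < N" and pos: "\<And>i. i<N \<Longrightarrow> 0 < v i"
  and sub: "\<And>i. i<N \<Longrightarrow> sum v {j. j<N \<and> E i j} \<le> \<mu> * v i"
  shows "spectral_radius (mat N N (\<lambda>(i,j). if E i j then 1 else 0)) \<le> \<mu>"
proof -
  define M where "M = (mat N N (\<lambda>(i,j). if E i j then (1::complex) else 0))"
  have M: "M \<in> carrier_mat N N" by (simp add: M_def)
  from spectral_radius_mem_max(1)[OF M N] obtain lam where lam: "lam \<in> spectrum M"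
    and eq: "spectral_radius M = norm lam" by auto
  then obtain w where ev: "eigenvector M w lam" unfolding spectrum_def eigenvalue_def by auto
  hence w: "w \<in> carrier_vec N" "w \<noteq> 0\<^sub>v N" "M *\<^sub>v w = lam \<cdot>\<^sub>v w"
    unfolding eigenvector_def using M by auto
  define f where "f i = norm (w$i) / v i" for i
  define c where "c = Max (f ` {..<N})"
  have "c \<in> f ` {..<N}" unfolding c_def using N by (intro Max_in) auto
  then obtain i0 where i0: "i0 < N" "c = f i0" by auto
  have fle: "\<And>i. i<N \<Longrightarrow> f i \<le> c" unfolding c_def by (intro Max_ge) auto
  obtain i1 where i1: "i1 < N" "w$i1 \<noteq> 0"
  proof (rule ccontr)
    assume "\<not> thesis"
    with that have "\<forall>i<N. w$i = 0" by blast
    hence "w = 0\<^sub>v N" using w(1) by (intro eq_vecI) auto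
    with w(2) show False by simp
  qed
  have "0 < f i1" using pos[OF i1(1)] i1(2) by (simp add: f_def)
  hence cpos: "0 < c" using fle[OF i1(1)] by linarith
  have vi0: "0 < v i0" using pos i0 by auto
  have cv: "c * v i0 = norm (w$i0)" using i0 vi0 by (simp add: f_def)
  have wi0: "0 < norm (w$i0)" using cv cpos vi0 by (metis mult_pos_pos)
  define S where "S = {j. j<N \<and> E i0 j}"
  have "norm lam * norm (w$i0) = norm ((M *\<^sub>v w)$i0)"
    using w(1,3) i0 by (simp add: norm_mult)
  also have "(M *\<^sub>v w)$i0 = sum (\<lambda>j. w $ j) S"
    unfolding M_def S_def by (rule mat01_mult[OF w(1) i0(1)])
  also have "norm \<dots> \<le> sum (\<lambda>j. norm (w $ j)) S" by (rule norm_sum)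
  also have "\<dots> \<le> sum (\<lambda>j. c * v j) S"
  proof (rule sum_mono)
    fix j assume "j \<in> S"
    hence j: "j < N" by (simp add: S_def)
    have "f j \<le> c" by (rule fle[OF j])
    thus "norm (w $ j) \<le> c * v j" using pos[OF j] by (simp add: f_def divide_le_eq)
  qed
  also have "\<dots> = c * sum v S" by (simp add: sum_distrib_left)
  also have "\<dots> \<le> c * (\<mu> * v i0)" using sub[OF i0(1)] cpos unfolding S_def by simp
  also have "\<dots> = \<mu> * norm (w$i0)" using cv by (simp add: algebra_simps)
  finally have "norm lam * norm (w$i0) \<le> \<mu> * norm (w$i0)" .
  hence "norm lam \<le> \<mu>" using wi0 by simp
  thus ?thesis using eq unfolding M_def by simp
qed

lemma eig_lower:
  assumes M: "M \<in> carrier_mat N N" and N: "0 < N"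
  and w: "w \<in> carrier_vec N" "w \<noteq> 0\<^sub>v N" "M *\<^sub>v w = lam \<cdot>\<^sub>v w"
  shows "norm lam \<le> spectral_radius M"
proof -
  have "eigenvector M w lam" unfolding eigenvector_def using M w by auto
  hence "lam \<in> spectrum M" unfolding spectrum_def eigenvalue_def by auto
  thus ?thesis by (intro spectral_radius_mem_max(2)[OF M N]) auto
qed



declare adj_join[simp del] adj_union[simp del]

lemma G1_bound:
  fixes a b y z \<mu> :: real
  assumes pos: "0<a" "0<b" "0<y" "0<z"
  and h0: "b + t*y + 3*k*z \<le> \<mu>*a" and h1: "a + t*y \<le> \<mu>*b" and h2: "a+b \<le> \<mu>*y"
  and h3: "a + 2*z \<le> \<mu>*z"
  shows "rho (gjoin (complete 1) (gunion (star t) (copies k (complete 3)))) \<le> \<mu>"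
proof -
  let ?G = "gjoin (complete 1) (gunion (star t) (copies k (complete 3)))"
  define N where "N = t+2+3*k"
  define v where "v j = (if j=0 then a else if j=1 then b else if j < t+2 then y else z)" for j
  have nv: "nverts ?G = N" by (simp add: star_def N_def)
  have adj: "adjr ?G i j = ((i = 0 \<and> 0 < j \<and> j < N) \<or> (j = 0 \<and> 0 < i \<and> i < N) \<or>
     (i = 1 \<and> 2 \<le> j \<and> j < t + 2) \<or> (j = 1 \<and> 2 \<le> i \<and> i < t + 2) \<or>
     (t + 2 \<le> i \<and> t + 2 \<le> j \<and> blk k (i-(t+2)) (j-(t+2))))" for i j
    unfolding adj_G1 adj_copies3 by (simp add: N_def mult.commute)
  have vnn: "0 \<le> v j" for j using pos by (simp add: v_def)
  have sy: "sum v {2..<t+2} = t*y"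
  proof -
    have "sum v {2..<t+2} = sum (\<lambda>_. y) {2..<t+2}" by (rule sum.cong) (auto simp: v_def)
    thus ?thesis by simp
  qed
  have sz: "sum v {t+2..<N} = 3*k*z"
  proof -
    have "sum v {t+2..<N} = sum (\<lambda>_. z) {t+2..<N}" by (rule sum.cong) (auto simp: v_def)
    thus ?thesis by (simp add: N_def)
  qed
  have "rho ?G = spectral_radius (mat N N (\<lambda>(i,j). if adjr ?G i j then 1 else 0))"
    unfolding rho_def adj_matrix_def nv ..
  also have "\<dots> \<le> \<mu>"
  proof (rule collatz)
    show "0 < N" by (simp add: N_def)
    show "0 < v i" if "i<N" for i using pos by (simp add: v_def)
    fix i assume i: "i < N"
    let ?S = "{j. j < N \<and> adjr ?G i j}"
    show "sum v ?S \<le> \<mu> * v i"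
    proof (cases "i = 0")
      case True
      have S: "?S = {1..<N}" unfolding adj using True by auto
      have c1: "sum v {1..<2} + sum v {2..<t+2} = sum v {1..<t+2}"
        by (rule sum.atLeastLessThan_concat) auto
      have c2: "sum v {1..<t+2} + sum v {t+2..<N} = sum v {1..<N}"
        by (rule sum.atLeastLessThan_concat) (auto simp: N_def)
      have e12: "{1..<2} = {1::nat}" by auto
      have "sum v {1..<N} = sum v {1..<2} + sum v {2..<t+2} + sum v {t+2..<N}"
        using c1 c2 by simp
      also have "\<dots> = b + t*y + 3*k*z" using sy sz by (simp add: v_def e12)
      finally show ?thesis using S True h0 by (simp add: v_def)
    next
      case False
      note i0 = False
      show ?thesis
      proof (cases "i = 1")
        case True
        have S: "?S = insert 0 {2..<t+2}" unfolding adj using True by (auto simp: N_def)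
        have "sum v ?S = a + t*y" unfolding S using sy by (simp add: v_def)
        thus ?thesis using True h1 by (simp add: v_def)
      next
        case False
        note i1 = False
        show ?thesis
        proof (cases "i < t+2")
          case True
          have S: "?S = {0,1}" unfolding adj using True i0 i1 i by (auto simp: N_def)
          show ?thesis unfolding S using True i0 i1 h2 by (simp add: v_def)
        next
          case False
          define i' where "i' = i - (t+2)"
          define q where "q = i' div 3"
          have iq: "3*q \<le> i'" "i' < 3*q+3" unfolding q_def by linarith+
          define B where "B = {t+2+3*q..<t+5+3*q} - {i}"
          have sub: "?S \<subseteq> insert 0 B"
          proof
            fix j assume j: "j \<in> ?S"
            show "j \<in> insert 0 B"
            proof (cases "j = 0")
              case True thus ?thesis by simp
            next
              case False
              have "adjr ?G i j" using j by blast
              hence "(i = 0 \<and> 0 < j \<and> j < N) \<or> (j = 0 \<and> 0 < i \<and> i < N) \<or>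
                 (i = 1 \<and> 2 \<le> j \<and> j < t + 2) \<or> (j = 1 \<and> 2 \<le> i \<and> i < t + 2) \<or>
                 (t + 2 \<le> i \<and> t + 2 \<le> j \<and> blk k (i-(t+2)) (j-(t+2)))" unfolding adj .
              with False i0 i1 \<open>\<not> i < t+2\<close> have jj: "t+2 \<le> j" "blk k i' (j-(t+2))"
                by (auto simp: i'_def)
              then obtain q' where q': "3*q' \<le> i'" "i' < 3*q'+3" "3*q' \<le> j-(t+2)" "j-(t+2) < 3*q'+3"
                 "i' \<noteq> j-(t+2)" unfolding blk_def by blast
              have "q' = q" using q' iq by linarith
              then show ?thesis using q' jj \<open>\<not> i < t+2\<close> unfolding B_def i'_def by auto
            qed
          qed
          have iB: "i \<in> {t+2+3*q..<t+5+3*q}" using iq \<open>\<not> i < t+2\<close> unfolding i'_def by auto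
          have cB: "card B = 2" unfolding B_def using iB by (simp add: card_Diff_singleton)
          have "0 \<notin> B" unfolding B_def by auto
          have "sum v ?S \<le> sum v (insert 0 B)"
            by (rule sum_mono2) (use sub vnn B_def in auto)
          also have "\<dots> = a + sum v B" using \<open>0 \<notin> B\<close> by (simp add: B_def v_def)
          also have "sum v B = sum (\<lambda>_. z) B" by (rule sum.cong) (auto simp: B_def v_def)
          also have "\<dots> = 2*z" using cB by simp
          finally show ?thesis using h3 i0 i1 False by (simp add: v_def)
        qed
      qed
    qed
  qed
  finally show ?thesis .
qed



lemma K_lower:
  assumes n: "3 \<le> n"
  shows "(1 + sqrt (8 * real n - 15)) / 2 \<le> rho (complete_tripartite 1 1 (n-2))"
proof -
  define L where "L = (1 + sqrt (8 * real n - 15)) / 2"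
  define s where "s = sqrt (8 * real n - 15)"
  have n3: "(3::real) \<le> real n" using n by simp
  have h15: "0 \<le> 8 * real n - 15" using n3 by linarith
  have s2: "s^2 = 8 * real n - 15" unfolding s_def by (rule real_sqrt_pow2[OF h15])
  have s0: "0 \<le> s" unfolding s_def using h15 by simp
  have Ls: "L = (1 + s) / 2" unfolding L_def s_def ..
  have Lpos: "0 < L" unfolding Ls using s0 by simp
  have Leq: "L * L = L + 2 * (real n - 2)"
  proof -
    have "L * L = (1 + 2*s + s^2) / 4" unfolding L_def s_def[symmetric] by (simp add: power2_eq_square algebra_simps)
    also have "\<dots> = L + 2 * (real n - 2)" unfolding L_def s_def[symmetric] s2 by (simp add: field_simps)
    finally show ?thesis .
  qed
  let ?K = "complete_tripartite 1 1 (n-2)"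
  have n2: "n - 2 + 2 = n" using n by simp
  have nv: "nverts ?K = n" unfolding nv_K n2 ..
  have adj: "adjr ?K i j = (i < n \<and> j < n \<and> i \<noteq> j \<and> (i < 2 \<or> j < 2))" for i j
    unfolding adj_K n2 ..
  define M where "M = mat n n (\<lambda>(i,j). if adjr ?K i j then (1::complex) else 0)"
  have rM: "rho ?K = spectral_radius M" unfolding rho_def adj_matrix_def nv M_def ..
  define w where "w = vec n (\<lambda>j. if j < 2 then (1::complex) else complex_of_real (2 / L))"
  have wc: "w \<in> carrier_vec n" unfolding w_def by simp
  have w0: "w \<noteq> 0\<^sub>v n"
  proof
    assume "w = 0\<^sub>v n"
    hence "w $ 0 = 0\<^sub>v n $ 0" by simp
    thus False using n unfolding w_def by simp
  qed
  have ev: "M *\<^sub>v w = complex_of_real L \<cdot>\<^sub>v w"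
  proof (rule eq_vecI)
    show "dim_vec (M *\<^sub>v w) = dim_vec (complex_of_real L \<cdot>\<^sub>v w)" by (simp add: M_def w_def)
    fix i assume "i < dim_vec (complex_of_real L \<cdot>\<^sub>v w)"
    hence i: "i < n" by (simp add: w_def)
    have mm: "(M *\<^sub>v w) $ i = sum (\<lambda>j. w $ j) {j. j < n \<and> adjr ?K i j}"
      unfolding M_def by (rule mat01_mult[OF wc i])
    show "(M *\<^sub>v w) $ i = (complex_of_real L \<cdot>\<^sub>v w) $ i"
    proof (cases "i < 2")
      case True
      have S: "{j. j < n \<and> adjr ?K i j} = insert (1 - i) {2..<n}"
      proof -
        have "i = 0 \<or> i = 1" using True by auto
        thus ?thesis unfolding adj using n by auto
      qed
      have "sum (\<lambda>j. w $ j) {2..<n} = sum (\<lambda>_. complex_of_real (2 / L)) {2..<n}"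
        by (rule sum.cong) (auto simp: w_def)
      also have "\<dots> = of_nat (n - 2) * complex_of_real (2 / L)" by simp
      finally have s1: "sum (\<lambda>j. w $ j) {2..<n} = of_nat (n - 2) * complex_of_real (2 / L)" .
      have "(M *\<^sub>v w) $ i = 1 + of_nat (n - 2) * complex_of_real (2 / L)"
      proof -
        have a: "1 - i < 2" "1 - i < n" "1 - i \<notin> {2..<n}" using True n by auto
        show ?thesis unfolding mm S using a s1 by (simp add: w_def)
      qed
      also have "\<dots> = complex_of_real (1 + real (n - 2) * (2 / L))" by simp
      also have "1 + real (n - 2) * (2 / L) = L"
      proof -
        have "real (n - 2) = real n - 2" using n by simp
        moreover have "L * (1 + real (n - 2) * (2 / L)) = L + 2 * real (n - 2)"
          using Lpos by (simp add: field_simps)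
        ultimately have "L * (1 + real (n - 2) * (2 / L)) = L * L" using Leq by simp
        thus ?thesis using Lpos by simp
      qed
      finally show ?thesis using True i by (simp add: w_def)
    next
      case False
      have S: "{j. j < n \<and> adjr ?K i j} = {0, 1}"
        unfolding adj using False i n by auto
      have "(M *\<^sub>v w) $ i = 2" unfolding mm S using n by (simp add: w_def)
      also have "(2::complex) = complex_of_real (L * (2 / L))" using Lpos by simp
      finally show ?thesis using False i by (simp add: w_def)
    qed
  qed
  have Mc: "M \<in> carrier_mat n n" unfolding M_def by simp
  have "norm (complex_of_real L) \<le> spectral_radius M"
    by (rule eig_lower[OF Mc _ wc w0 ev]) (use n in simp)
  moreover have "norm (complex_of_real L) = L" using Lpos by simp
  ultimately have "L \<le> rho ?K" using rM by simp
  thus ?thesis unfolding L_def .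
qed

lemma below_root:
  fixes \<mu> L :: real
  assumes "\<mu>^2 - \<mu> < L^2 - L" "1/2 \<le> L"
  shows "\<mu> < L"
proof (rule ccontr)
  assume "\<not> \<mu> < L"
  hence "0 \<le> (\<mu> - L) * (\<mu> + L - 1)" using assms by (intro mult_nonneg_nonneg) auto
  hence "L^2 - L \<le> \<mu>^2 - \<mu>" by (simp add: power2_eq_square algebra_simps)
  with assms show False by simp
qed



lemma below_L:
  fixes \<mu> :: real
  assumes n: "3 \<le> n" and p: "\<mu>*\<mu> - \<mu> < 2 * (real n - 2)"
  shows "\<mu> < (1 + sqrt (8 * real n - 15)) / 2"
proof -
  define L where "L = (1 + sqrt (8 * real n - 15)) / 2"
  define s where "s = sqrt (8 * real n - 15)"
  have n3: "(3::real) \<le> real n" using n by simp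
  have h15: "0 \<le> 8 * real n - 15" using n3 by linarith
  have s2: "s^2 = 8 * real n - 15" unfolding s_def by (rule real_sqrt_pow2[OF h15])
  have s0: "0 \<le> s" unfolding s_def using h15 by simp
  have Ls: "L = (1 + s) / 2" unfolding L_def s_def ..
  have Leq: "L * L = L + 2 * (real n - 2)"
  proof -
    have "L * L = (1 + 2*s + s^2) / 4" unfolding Ls by (simp add: power2_eq_square algebra_simps)
    also have "\<dots> = L + 2 * (real n - 2)" unfolding Ls s2 by (simp add: field_simps)
    finally show ?thesis .
  qed
  have Lh: "1/2 \<le> L" unfolding Ls using s0 by simp
  show ?thesis unfolding L_def[symmetric]
  proof (rule ccontr)
    assume "\<not> \<mu> < L"
    hence "0 \<le> (\<mu> - L) * (\<mu> + L - 1)" using Lh by (intro mult_nonneg_nonneg) auto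
    hence "L*L - L \<le> \<mu>*\<mu> - \<mu>" by (simp add: algebra_simps)
    with p Leq show False by simp
  qed
qed

lemma root_case:
  fixes t k :: nat
  assumes k1: "1 \<le> k" and big: "7 \<le> t + 3*k"
  shows "\<exists>\<mu>. rho (gjoin (complete 1) (gunion (star t) (copies k (complete 3)))) \<le> \<mu> \<and>
            \<mu>*\<mu> - \<mu> < 2 * (real (t + 2 + 3*k) - 2)"
proof -
  define T where "T = real t"
  define K where "K = real k"
  define X where "X = T + 2 + 3*K"
  have K1: "1 \<le> K" unfolding K_def using k1 by simp
  have T0: "0 \<le> T" unfolding T_def by simp
  have big': "7 \<le> T + 3*K" unfolding T_def K_def using big by (metis of_nat_add of_nat_le_iff of_nat_mult of_nat_numeral)
  define g where "g x = (x-2)*(x*x-x-2*T) - 3*K*x" for x :: real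
  have g4: "g 4 \<le> 0" unfolding g_def using big' by simp
  have X9: "9 \<le> X" unfolding X_def using big' by simp
  have gX: "0 \<le> g X"
  proof -
    have A: "X*X - X - 2*T \<ge> X*X - 3*X" unfolding X_def using K1 T0 by simp
    have B: "(X-2)*(X*X-X-2*T) \<ge> (X-2)*(X*X-3*X)" by (rule mult_left_mono[OF A]) (use X9 in simp)
    have "X*X \<ge> 6*X" using X9 by (intro mult_right_mono) auto
    hence "X*(X*X-6*X+6) \<ge> 0" using X9 by (intro mult_nonneg_nonneg) auto
    moreover have "(X-2)*(X*X-3*X) - X*X = X*(X*X-6*X+6)" by (simp add: algebra_simps)
    ultimately have C: "(X-2)*(X*X-3*X) \<ge> X*X" by linarith
    have "3*K \<le> X" unfolding X_def using T0 by simp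
    hence D: "3*K*X \<le> X*X" using X9 by (intro mult_right_mono) auto
    show ?thesis unfolding g_def using B C D by linarith
  qed
  have cont: "continuous_on {4..X} g" unfolding g_def by (intro continuous_intros)
  obtain \<mu> where mu: "4 \<le> \<mu>" "\<mu> \<le> X" "g \<mu> = 0"
    using IVT'[of g 4 0 X, OF g4 gX _ cont] X9 by auto
  have g4': "g 4 < 0" unfolding g_def using big' by simp
  have m4: "4 < \<mu>" using mu g4' by (cases "\<mu> = 4") auto
  have geq: "3*K*\<mu> = (\<mu>-2)*(\<mu>*\<mu>-\<mu>-2*T)" using mu(3) unfolding g_def by simp
  have m2: "0 < \<mu> - 2" using m4 by simp
  have "3*K*\<mu> \<ge> 0" using K1 m4 by simp
  hence pos1: "0 \<le> (\<mu>-2)*(\<mu>*\<mu>-\<mu>-2*T)" using geq by simp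
  have bound: "rho (gjoin (complete 1) (gunion (star t) (copies k (complete 3)))) \<le> \<mu>"
  proof (rule G1_bound[where a = "\<mu>*(\<mu>-2)" and b = "\<mu>*(\<mu>-2)" and y = "2*(\<mu>-2)" and z = \<mu>])
    show "0 < \<mu>*(\<mu>-2)" using m2 m4 by simp
    show "0 < \<mu>*(\<mu>-2)" using m2 m4 by simp
    show "0 < 2*(\<mu>-2)" using m2 by simp
    show "0 < \<mu>" using m4 by simp
    have "\<mu>*(\<mu>*(\<mu>-2)) - (\<mu>*(\<mu>-2) + T*(2*(\<mu>-2)) + 3*K*\<mu>) = (\<mu>-2)*(\<mu>*\<mu>-\<mu>-2*T) - 3*K*\<mu>"
      by (simp add: algebra_simps)
    thus "\<mu>*(\<mu>-2) + real t*(2*(\<mu>-2)) + 3*real k*\<mu> \<le> \<mu>*(\<mu>*(\<mu>-2))"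
      using geq unfolding T_def K_def by linarith
    have "\<mu>*(\<mu>*(\<mu>-2)) - (\<mu>*(\<mu>-2) + T*(2*(\<mu>-2))) = (\<mu>-2)*(\<mu>*\<mu>-\<mu>-2*T)"
      by (simp add: algebra_simps)
    thus "\<mu>*(\<mu>-2) + real t*(2*(\<mu>-2)) \<le> \<mu>*(\<mu>*(\<mu>-2))"
      using pos1 unfolding T_def by linarith
    show "\<mu>*(\<mu>-2) + \<mu>*(\<mu>-2) \<le> \<mu>*(2*(\<mu>-2))" by (simp add: algebra_simps)
    show "\<mu>*(\<mu>-2) + 2*\<mu> \<le> \<mu>*\<mu>" by (simp add: algebra_simps)
  qed
  have "(\<mu>-2)*(\<mu>*\<mu>-\<mu>-2*T-6*K) = (\<mu>-2)*(\<mu>*\<mu>-\<mu>-2*T) - 6*K*(\<mu>-2)"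
    by (simp add: algebra_simps)
  also have "\<dots> = 3*K*\<mu> - 6*K*(\<mu>-2)" using geq by simp
  also have "\<dots> = - (3*K*(\<mu>-4))" by (simp add: algebra_simps)
  also have "\<dots> < 0" using K1 m4 by simp
  finally have "(\<mu>-2)*(\<mu>*\<mu>-\<mu>-2*T-6*K) < 0" .
  hence "\<mu>*\<mu>-\<mu>-2*T-6*K < 0" using m2 by (simp add: mult_less_0_iff)
  hence "\<mu>*\<mu> - \<mu> < 2 * (real (t + 2 + 3*k) - 2)" unfolding T_def K_def by simp
  with bound show ?thesis by blast
qed



theorem lemma4p6:
  fixes t n :: nat
  assumes "t \<ge> 2" and "n \<ge> t + 5" and "(n - t) mod 3 = 2"
  shows "rho (gjoin (complete 1) (gunion (star t) (copies ((n - t - 2) div 3) (complete 3))))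
           < rho (complete_tripartite 1 1 (n - 2))"
proof -
  define k where "k = (n - t - 2) div 3"
  define q where "q = (n - t) div 3"
  have "n - t = 3*q + 2" using div_mult_mod_eq[of "n-t" 3] assms(3) unfolding q_def by linarith
  hence "n - t - 2 = 3*q" by simp
  hence kq: "k = q" unfolding k_def by simp
  have nk: "n = t + 2 + 3*k" using \<open>n - t = 3*q + 2\<close> kq assms(2) by linarith
  have k1: "1 \<le> k" using nk assms(2) by linarith
  let ?G = "gjoin (complete 1) (gunion (star t) (copies k (complete 3)))"
  have n3: "3 \<le> n" using assms by linarith
  have ex: "\<exists>\<mu>. rho ?G \<le> \<mu> \<and> \<mu>*\<mu> - \<mu> < 2 * (real n - 2)"
  proof (cases "7 \<le> t + 3*k")
    case True
    from root_case[OF k1 True] show ?thesis using nk by simp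
  next
    case False
    hence "t + 3*k \<le> 6" by simp
    hence tk: "k = 1" "t = 2 \<or> t = 3" using k1 assms(1) by auto
    show ?thesis
    proof (cases "t = 2")
      case True
      have "rho ?G \<le> 7/2"
        by (rule G1_bound[where a = 1 and b = "11/20" and y = "9/20" and z = "2/3"])
           (simp_all add: True tk)
      moreover have "(7/2::real)*(7/2) - 7/2 < 2 * (real n - 2)" using nk True tk by simp
      ultimately show ?thesis by blast
    next
      case False
      hence t3: "t = 3" using tk by simp
      have "rho ?G \<le> 19/5"
        by (rule G1_bound[where a = 1 and b = "3/5" and y = "17/40" and z = "5/9"])
           (simp_all add: t3 tk)
      moreover have "(19/5::real)*(19/5) - 19/5 < 2 * (real n - 2)" using nk t3 tk by simp
      ultimately show ?thesis by blast
    qed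
  qed
  then obtain \<mu> where mu: "rho ?G \<le> \<mu>" "\<mu>*\<mu> - \<mu> < 2 * (real n - 2)" by blast
  have "\<mu> < (1 + sqrt (8 * real n - 15)) / 2" by (rule below_L[OF n3 mu(2)])
  also have "\<dots> \<le> rho (complete_tripartite 1 1 (n - 2))" by (rule K_lower[OF n3])
  finally show ?thesis using mu(1) unfolding k_def by simp
qed


end
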